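(* Let $\mu$ be a distribution on $\Sigma\times\Gamma\times\Phi$ (finite sets). If $\mu$ has no $\mathbb{Z}$-embeddings, then $\mu$ is pairwise-connected.
   Context: An embedding of $\mu$ into an Abelian group $A$ is a triple of maps $\mathsf{a}:\Sigma\to A$, $\mathsf{b}:\Gamma\to A$, $\mathsf{c}:\Phi\to A$ with $\mathsf{a}(x)+\mathsf{b}(y)+\mathsf{c}(z)=0$ for all $(x,y,z)\in\mathsf{supp}(\mu)$; $\mu$ has no $\mathbb{Z}$-embeddings if every embedding into $(\mathbb{Z},+)$ consists of constant maps. $\mu$ is $(x,y)$-pairwise-connected if the bipartite graph on vertex set $\Sigma\sqcup\Gamma$, with an edge between $x\in\Sigma$ and $y\in\Gamma$ whenever there is $z$ with $(x,y,z)\in\mathsf{supp}(\mu)$, is connected; $(y,z)$- and $(x,z)$-pairwise-connectivity are defined analogously; $\mu$ is pairwise-connected if it is $(x,y)$-, $(y,z)$- and $(x,z)$-pairwise-connected. *)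

theory Defs
  imports "HOL-Probability.Probability_Mass_Function"
begin

definition Z_embedding ::
  "('a \<times> 'b \<times> 'c) pmf \<Rightarrow> ('a \<Rightarrow> int) \<Rightarrow> ('b \<Rightarrow> int) \<Rightarrow> ('c \<Rightarrow> int) \<Rightarrow> bool" where
  "Z_embedding mu a b c \<longleftrightarrow> (\<forall>x y z. (x, y, z) \<in> set_pmf mu \<longrightarrow> a x + b y + c z = 0)"

definition no_Z_embeddings :: "('a \<times> 'b \<times> 'c) pmf \<Rightarrow> bool" where
  "no_Z_embeddings mu \<longleftrightarrow>
     (\<forall>a b c. Z_embedding mu a b c \<longrightarrow>
        (\<exists>k. a = (\<lambda>_. k)) \<and> (\<exists>k. b = (\<lambda>_. k)) \<and> (\<exists>k. c = (\<lambda>_. k)))"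

definition bip_edge :: "('p \<times> 'q) set \<Rightarrow> 'p + 'q \<Rightarrow> 'p + 'q \<Rightarrow> bool" where
  "bip_edge R s t \<longleftrightarrow> (\<exists>p q. (p, q) \<in> R \<and> ((s = Inl p \<and> t = Inr q) \<or> (s = Inr q \<and> t = Inl p)))"

definition bip_connected :: "('p \<times> 'q) set \<Rightarrow> bool" where
  "bip_connected R \<longleftrightarrow> (\<forall>s t. (bip_edge R)\<^sup>*\<^sup>* s t)"

definition xy_connected :: "('a \<times> 'b \<times> 'c) pmf \<Rightarrow> bool" where
  "xy_connected mu \<longleftrightarrow> bip_connected ((\<lambda>(x, y, z). (x, y)) ` set_pmf mu)"

definition yz_connected :: "('a \<times> 'b \<times> 'c) pmf \<Rightarrow> bool" where
  "yz_connected mu \<longleftrightarrow> bip_connected ((\<lambda>(x, y, z). (y, z)) ` set_pmf mu)"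

definition xz_connected :: "('a \<times> 'b \<times> 'c) pmf \<Rightarrow> bool" where
  "xz_connected mu \<longleftrightarrow> bip_connected ((\<lambda>(x, y, z). (x, z)) ` set_pmf mu)"

definition pairwise_connected :: "('a \<times> 'b \<times> 'c) pmf \<Rightarrow> bool" where
  "pairwise_connected mu \<longleftrightarrow> xy_connected mu \<and> yz_connected mu \<and> xz_connected mu"

end

theory Submission
  imports Defs
begin

lemma conn_aux:
  fixes R :: "('p \<times> 'q) set"
  assumes ne: "R \<noteq> {}"
  and H: "\<And>a b. (\<forall>p q. (p,q) \<in> R \<longrightarrow> a p + b q = (0::int)) \<Longrightarrow> (\<exists>k. a = (\<lambda>_. k)) \<and> (\<exists>k. b = (\<lambda>_. k))"
  shows "bip_connected R"
  unfolding bip_connected_def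
proof (intro allI)
  fix s t
  define C where "C = {v. (bip_edge R)\<^sup>*\<^sup>* s v}"
  define a where "a p = (if Inl p \<in> C then 1 else (0::int))" for p
  define b where "b q = (if Inr q \<in> C then -1 else (0::int))" for q
  have E: "\<forall>p q. (p,q)\<in>R \<longrightarrow> a p + b q = 0"
  proof (intro allI impI)
    fix p q assume "(p,q) \<in> R"
    then have e1: "bip_edge R (Inl p) (Inr q)" and e2: "bip_edge R (Inr q) (Inl p)"
      unfolding bip_edge_def by blast+
    have "Inl p \<in> C \<longleftrightarrow> Inr q \<in> C" unfolding C_def using e1 e2
      by (meson mem_Collect_eq rtranclp.rtrancl_into_rtrancl)
    then show "a p + b q = 0" by (simp add: a_def b_def)
  qed
  then obtain k1 k2 where ka: "a = (\<lambda>_. k1)" and kb: "b = (\<lambda>_. k2)" using H by blast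
  obtain p0 q0 where "(p0,q0) \<in> R" using ne by auto
  then have "a p0 + b q0 = 0" using E by blast
  hence k: "k1 + k2 = 0" using ka kb by simp
  have allC: "v \<in> C \<longleftrightarrow> k1 = 1" for v
  proof (cases v)
    case (Inl p)
    have "a p = k1" using ka by simp
    then show ?thesis using Inl by (auto simp: a_def split: if_splits)
  next
    case (Inr q)
    have "b q = k2" using kb by simp
    then show ?thesis using Inr k by (auto simp: b_def split: if_splits)
  qed
  have "s \<in> C" unfolding C_def by simp
  then have "t \<in> C" using allC by blast
  then show "(bip_edge R)\<^sup>*\<^sup>* s t" unfolding C_def by simp
qed

theorem lemma1p3:
  fixes mu :: "('a::finite \<times> 'b::finite \<times> 'c::finite) pmf"
  assumes "no_Z_embeddings mu"
  shows "pairwise_connected mu"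
proof -
  have ne: "set_pmf mu \<noteq> {}" by (rule set_pmf_not_empty)
  have xy: "xy_connected mu" unfolding xy_connected_def
  proof (rule conn_aux)
    show "(\<lambda>(x, y, z). (x, y)) ` set_pmf mu \<noteq> {}" using ne by simp
  next
    fix a :: "'a \<Rightarrow> int" and b :: "'b \<Rightarrow> int"
    assume h: "\<forall>p q. (p, q) \<in> (\<lambda>(x, y, z). (x, y)) ` set_pmf mu \<longrightarrow> a p + b q = 0"
    have "Z_embedding mu a b (\<lambda>_. 0)" unfolding Z_embedding_def
      using h by force
    then show "(\<exists>k. a = (\<lambda>_. k)) \<and> (\<exists>k. b = (\<lambda>_. k))"
      using assms unfolding no_Z_embeddings_def by blast
  qed
  have yz: "yz_connected mu" unfolding yz_connected_def
  proof (rule conn_aux)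
    show "(\<lambda>(x, y, z). (y, z)) ` set_pmf mu \<noteq> {}" using ne by simp
  next
    fix a :: "'b \<Rightarrow> int" and b :: "'c \<Rightarrow> int"
    assume h: "\<forall>p q. (p, q) \<in> (\<lambda>(x, y, z). (y, z)) ` set_pmf mu \<longrightarrow> a p + b q = 0"
    have "Z_embedding mu (\<lambda>_. 0) a b" unfolding Z_embedding_def
      using h by force
    then show "(\<exists>k. a = (\<lambda>_. k)) \<and> (\<exists>k. b = (\<lambda>_. k))"
      using assms unfolding no_Z_embeddings_def by blast
  qed
  have xz: "xz_connected mu" unfolding xz_connected_def
  proof (rule conn_aux)
    show "(\<lambda>(x, y, z). (x, z)) ` set_pmf mu \<noteq> {}" using ne by simp
  next
    fix a :: "'a \<Rightarrow> int" and b :: "'c \<Rightarrow> int"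
    assume h: "\<forall>p q. (p, q) \<in> (\<lambda>(x, y, z). (x, z)) ` set_pmf mu \<longrightarrow> a p + b q = 0"
    have "Z_embedding mu a (\<lambda>_. 0) b" unfolding Z_embedding_def
      using h by force
    then show "(\<exists>k. a = (\<lambda>_. k)) \<and> (\<exists>k. b = (\<lambda>_. k))"
      using assms unfolding no_Z_embeddings_def by blast
  qed
  show ?thesis unfolding pairwise_connected_def using xy yz xz by blast
qed

end
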